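(* Let $p\geq 1$ and let $n_0<n_1<\cdots<n_p$ be positive integers with $n_i=n_0+id$ for a fixed positive integer $d$, such that $\gcd(n_0,\dots,n_p)=1$ and $\{n_0,\dots,n_p\}$ minimally generates the numerical semigroup $S_1=\langle n_0,\dots,n_p\rangle$. Then the Apéry set $\mathrm{Ap}(S_1,n_p)$ is a homogeneous subset of $S_1$.
   Context: For a numerical semigroup $T=\langle n_0,\dots,n_p\rangle$ and $0\neq a\in T$, the Apéry set is $\mathrm{Ap}(T,a)=\{s\in T: s-a\notin T\}$. For $0\neq s\in T$, the set of lengths is $\mathcal{L}(s)=\{\sum_{i=0}^p\lambda_i : s=\sum_{i=0}^p\lambda_in_i,\ \lambda_i\in\mathbb{N}\}$. A subset $A\subseteq T$ is homogeneous if it is empty or $\mathcal{L}(s)$ is a singleton for every $0\neq s\in A$. *)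

theory Defs
  imports Main
begin

definition gen_by :: "(nat \<Rightarrow> nat) \<Rightarrow> nat set \<Rightarrow> nat set" where
  "gen_by g I = {s. \<exists>lam :: nat \<Rightarrow> nat. s = (\<Sum>i\<in>I. lam i * g i)}"

definition num_sgp :: "(nat \<Rightarrow> nat) \<Rightarrow> nat \<Rightarrow> nat set" where
  "num_sgp g p = gen_by g {..p}"

definition minimally_generates :: "(nat \<Rightarrow> nat) \<Rightarrow> nat \<Rightarrow> bool" where
  "minimally_generates g p \<longleftrightarrow> (\<forall>i\<le>p. g i \<notin> gen_by g ({..p} - {i}))"

text \<open>Apery set Ap(T,a) = {s in T. s - a not in T} (s - a taken in the integers).\<close>
definition apery :: "nat set \<Rightarrow> nat \<Rightarrow> nat set" where
  "apery T a = {s \<in> T. \<not> (a \<le> s \<and> s - a \<in> T)}"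

definition lengths :: "(nat \<Rightarrow> nat) \<Rightarrow> nat \<Rightarrow> nat \<Rightarrow> nat set" where
  "lengths g p s = {(\<Sum>i\<le>p. lam i) | lam :: nat \<Rightarrow> nat. s = (\<Sum>i\<le>p. lam i * g i)}"

definition homogeneous :: "(nat \<Rightarrow> nat) \<Rightarrow> nat \<Rightarrow> nat set \<Rightarrow> bool" where
  "homogeneous g p A \<longleftrightarrow> A = {} \<or> (\<forall>s\<in>A. s \<noteq> 0 \<longrightarrow> (\<exists>l. lengths g p s = {l}))"

end

theory Submission
  imports Defs
begin

lemma gen_add:
  assumes "x \<in> gen_by g I" "finite I" "j \<in> I"
  shows "x + g j \<in> gen_by g I"
proof -
  obtain lam where x: "x = (\<Sum>i\<in>I. lam i * g i)" using assms(1) unfolding gen_by_def by auto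
  let ?l = "\<lambda>i. lam i + (if i = j then 1 else 0)"
  have "(\<Sum>i\<in>I. ?l i * g i) = (\<Sum>i\<in>I. lam i * g i + (if i = j then g i else 0))"
    by (rule sum.cong) auto
  also have "\<dots> = (\<Sum>i\<in>I. lam i * g i) + (\<Sum>i\<in>I. (if i = j then g i else 0))"
    by (rule sum.distrib)
  also have "(\<Sum>i\<in>I. (if i = j then g i else 0)) = g j"
    using assms(2,3) by (simp add: sum.delta)
  finally have "x + g j = (\<Sum>i\<in>I. ?l i * g i)" using x by simp
  thus ?thesis unfolding gen_by_def by (intro CollectI exI[of _ ?l])
qed

lemma gen_zero: "0 \<in> gen_by g I"
  unfolding gen_by_def by (rule CollectI, rule exI[of _ "\<lambda>_. 0"]) simp

lemma arith_in:
  assumes "\<And>i. i \<le> p \<Longrightarrow> n i = n 0 + i * d"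
  shows "m \<le> k * p \<Longrightarrow> k * n 0 + m * d \<in> gen_by n {..p}"
proof (induction k arbitrary: m)
  case 0
  then show ?case by (simp add: gen_zero)
next
  case (Suc k)
  show ?case
  proof (cases "m \<ge> p")
    case True
    have "k * n 0 + (m - p) * d \<in> gen_by n {..p}" using Suc by (intro Suc.IH) auto
    hence "k * n 0 + (m - p) * d + n p \<in> gen_by n {..p}" by (intro gen_add) auto
    moreover have "k * n 0 + (m - p) * d + n p = Suc k * n 0 + m * d"
    proof -
      obtain q where "m = p + q" using True le_Suc_ex by blast
      thus ?thesis using assms[of p] by (simp add: algebra_simps)
    qed
    ultimately show ?thesis by simp
  next
    case False
    have "k * n 0 + 0 * d \<in> gen_by n {..p}" by (intro Suc.IH) auto
    hence "k * n 0 + n m \<in> gen_by n {..p}" using False by (intro gen_add) auto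
    moreover have "k * n 0 + n m = Suc k * n 0 + m * d" using assms[of m] False by simp
    ultimately show ?thesis by simp
  qed
qed

theorem lemma4p3:
  fixes n :: "nat \<Rightarrow> nat" and p d :: nat
  assumes "p \<ge> 1"
    and "d > 0"
    and "n 0 > 0"
    and "\<And>i. i \<le> p \<Longrightarrow> n i = n 0 + i * d"
    and "Gcd (n ` {..p}) = 1"
    and "minimally_generates n p"
  shows "homogeneous n p (apery (num_sgp n p) (n p))"
proof -
  have cop: "coprime (n 0) d"
  proof -
    have "gcd (n 0) d dvd Gcd (n ` {..p})"
    proof (rule Gcd_greatest)
      fix b assume "b \<in> n ` {..p}"
      then obtain i where i: "i \<le> p" "b = n i" by auto
      have "gcd (n 0) d dvd n 0 + i * d" by simp
      thus "gcd (n 0) d dvd b" using i assms(4)[OF i(1)] by simp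
    qed
    thus ?thesis using assms(5) by (simp add: coprime_iff_gcd_eq_1)
  qed
  have np: "p < n 0"
  proof (rule ccontr)
    assume "\<not> p < n 0"
    hence le: "n 0 \<le> p" by simp
    have "n (n 0) = (\<Sum>i\<in>{..p} - {n 0}. (if i = 0 then 1 + d else 0) * n i)"
    proof -
      have "(\<Sum>i\<in>{..p} - {n 0}. (if i = 0 then 1 + d else 0) * n i)
          = (\<Sum>i\<in>{..p} - {n 0}. (if i = 0 then (1 + d) * n i else 0))"
        by (rule sum.cong) auto
      also have "\<dots> = (1 + d) * n 0" using assms(3) by (simp add: sum.delta)
      finally show ?thesis using assms(4)[OF le] by (simp add: algebra_simps)
    qed
    hence "n (n 0) \<in> gen_by n ({..p} - {n 0})" unfolding gen_by_def
      by (intro CollectI exI[of _ "\<lambda>i. if i = 0 then 1 + d else 0"])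
    thus False using assms(6) le unfolding minimally_generates_def by auto
  qed
  have key: "\<exists>m. s = (\<Sum>i\<le>p. lam i) * n 0 + m * d \<and> m < p"
    if s: "s \<in> apery (num_sgp n p) (n p)" "s \<noteq> 0" "s = (\<Sum>i\<le>p. lam i * n i)" for s lam
  proof -
    define k where "k = (\<Sum>i\<le>p. lam i)"
    define m where "m = (\<Sum>i\<le>p. i * lam i)"
    have "s = (\<Sum>i\<le>p. lam i * n 0 + (i * lam i) * d)"
    proof -
      have "lam i * n i = lam i * n 0 + (i * lam i) * d" if "i \<in> {..p}" for i
        using assms(4)[of i] that by (simp add: algebra_simps)
      hence "(\<Sum>i\<le>p. lam i * n i) = (\<Sum>i\<le>p. lam i * n 0 + (i * lam i) * d)"
        by (intro sum.cong) auto
      thus ?thesis using s(3) by simp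
    qed
    hence seq: "s = k * n 0 + m * d" by (simp add: k_def m_def sum.distrib sum_distrib_right)
    have "m \<le> (\<Sum>i\<le>p. p * lam i)" unfolding m_def by (rule sum_mono) simp
    hence mk: "m \<le> k * p" by (simp add: k_def sum_distrib_left[symmetric] mult.commute)
    have "k \<ge> 1" using s(2) seq mk by (cases k) auto
    have "m < p"
    proof (rule ccontr)
      assume "\<not> m < p"
      hence "m - p \<le> (k - 1) * p" using mk by (simp add: diff_mult_distrib)
      hence "(k - 1) * n 0 + (m - p) * d \<in> gen_by n {..p}" using arith_in[of p n d "m - p" "k - 1"] assms(4) by blast
      moreover have "(k - 1) * n 0 + (m - p) * d = s - n p \<and> n p \<le> s"
      proof -
        obtain q where q: "m = p + q" using \<open>\<not> m < p\<close> le_Suc_ex not_less by blast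
        obtain k' where k': "k = Suc k'" using \<open>k \<ge> 1\<close> by (cases k) auto
        have np': "n p = n 0 + p * d" using assms(4)[of p] by simp
        have "s = (k' * n 0 + q * d) + n p" unfolding seq np' q k' by (simp add: algebra_simps)
        thus ?thesis using q k' by simp
      qed
      ultimately show False using s(1) unfolding apery_def num_sgp_def by auto
    qed
    thus ?thesis using seq k_def by blast
  qed
  have "\<exists>l. lengths n p s = {l}" if s: "s \<in> apery (num_sgp n p) (n p)" "s \<noteq> 0" for s
  proof -
    have "s \<in> num_sgp n p" using s unfolding apery_def by auto
    then obtain lam where lam: "s = (\<Sum>i\<le>p. lam i * n i)"
      unfolding num_sgp_def gen_by_def atMost_def by auto
    have uniq: "k1 \<le> k2" if kin: "k1 \<in> lengths n p s" "k2 \<in> lengths n p s" for k1 k2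
    proof (rule ccontr)
      assume "\<not> k1 \<le> k2"
      obtain l1 where l1: "k1 = (\<Sum>i\<le>p. l1 i)" "s = (\<Sum>i\<le>p. l1 i * n i)"
        using kin(1) unfolding lengths_def by blast
      obtain m1 where m1: "s = k1 * n 0 + m1 * d" "m1 < p"
        using key[OF s l1(2)] l1(1) by blast
      obtain l2 where l2: "k2 = (\<Sum>i\<le>p. l2 i)" "s = (\<Sum>i\<le>p. l2 i * n i)"
        using kin(2) unfolding lengths_def by blast
      obtain m2 where m2: "s = k2 * n 0 + m2 * d" "m2 < p"
        using key[OF s l2(2)] l2(1) by blast
      obtain j where j: "k1 = k2 + j" "j > 0" using \<open>\<not> k1 \<le> k2\<close>
        by (metis add_diff_inverse_nat less_imp_le_nat not_le zero_less_diff)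
      have e1: "j * n 0 + m1 * d = m2 * d" using m1(1) m2(1) j(1) by (simp add: algebra_simps)
      have jpos: "j * n 0 > 0" using j(2) assms(3) by simp
      have "m1 * d < m2 * d" using e1 jpos by linarith
      hence "m1 < m2" by simp
      then obtain r where r: "m2 = m1 + r" using less_imp_add_positive by blast
      have e: "j * n 0 = r * d" using e1 r by (simp add: algebra_simps)
      hence "n 0 dvd r * d" by (metis dvd_triv_right)
      hence "n 0 dvd r" using cop by (simp add: coprime_dvd_mult_left_iff)
      moreover have "r > 0" using e jpos by (cases r) auto
      ultimately have "n 0 \<le> r" by (simp add: dvd_imp_le)
      hence "n 0 \<le> m2" using r by simp
      thus False using m2 np by linarith
    qed
    have "(\<Sum>i\<le>p. lam i) \<in> lengths n p s" unfolding lengths_def using lam by blast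
    hence "lengths n p s = {\<Sum>i\<le>p. lam i}" using uniq by (auto intro: antisym)
    thus ?thesis by blast
  qed
  thus ?thesis unfolding homogeneous_def by blast
qed

end
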